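(* An ideal $\mathcal I$ on $\mathbb N$ has the property of long intervals if and only if, for every increasing sequence $(n_k)$ of positive integers, there is an increasing sequence $(m_k)$ of positive integers such that $$\bigcup_{k\in\mathbb N}\{m_k,m_k+1,\ldots,m_k+n_k-1\} \in\mathcal I\quad\text{and}\quad m_k+n_k-1<m_{k+1}\ \text{ for all }k\in\mathbb N.$$
   Context: $\mathbb N=\{1,2,\dots\}$. An ideal on $\mathbb N$ is a family $\mathcal I\subset\mathcal P(\mathbb N)$ closed under finite unions and subsets, with $\mathbb N\notin\mathcal I$ and containing all finite subsets of $\mathbb N$. An ideal $\mathcal I$ on $\mathbb N$ has the property of long intervals (PLI) if there exists a sequence $(m(n))_{n\in\mathbb N}$ of positive integers such that $\bigcup_{n\in\mathbb N}\{m(n),m(n)+1,\ldots,m(n)+n-1\}\in\mathcal I$. *)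

theory Defs
  imports Main
begin

(* The paper's N = {1,2,...} is modelled as the subset {1..} of type nat. *)

definition is_ideal :: "nat set set \<Rightarrow> bool" where
  "is_ideal I \<longleftrightarrow>
     I \<subseteq> Pow {1..} \<and>
     (\<forall>A\<in>I. \<forall>B\<in>I. A \<union> B \<in> I) \<and>
     (\<forall>A\<in>I. \<forall>B. B \<subseteq> A \<longrightarrow> B \<in> I) \<and>
     {1..} \<notin> I \<and>
     (\<forall>F. F \<subseteq> {1..} \<and> finite F \<longrightarrow> F \<in> I)"

definition has_PLI :: "nat set set \<Rightarrow> bool" where
  "has_PLI I \<longleftrightarrow>
     (\<exists>m :: nat \<Rightarrow> nat. (\<forall>n\<ge>1. m n \<ge> 1) \<and>
        (\<Union>n\<in>{1..}. {m n ..< m n + n}) \<in> I)"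

end

theory Submission
  imports Defs
begin

definition gpos :: "(nat \<Rightarrow> nat) \<Rightarrow> nat \<Rightarrow> nat \<Rightarrow> nat" where
  "gpos m B L = max (m (B+L+1)) (B+1)"

lemma gpos_sub: "{gpos m B L ..< gpos m B L + L} \<subseteq> {m (B+L+1) ..< m (B+L+1) + (B+L+1)}"
  unfolding gpos_def by auto

lemma gpos_gt: "B < gpos m B L"
  unfolding gpos_def by auto

theorem fact4p2:
  fixes I :: "nat set set"
  assumes "is_ideal I"
  shows "has_PLI I \<longleftrightarrow>
    (\<forall>nn :: nat \<Rightarrow> nat.
       (\<forall>k\<ge>1. nn k \<ge> 1) \<and> strict_mono_on {1..} nn \<longrightarrow>
       (\<exists>mm :: nat \<Rightarrow> nat.
          (\<forall>k\<ge>1. mm k \<ge> 1) \<and> strict_mono_on {1..} mm \<and>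
          (\<Union>k\<in>{1..}. {mm k ..< mm k + nn k}) \<in> I \<and>
          (\<forall>k\<ge>1. mm k + nn k - 1 < mm (k + 1))))"
proof
  assume "has_PLI I"
  then obtain m where A: "(\<Union>n\<in>{1..}. {m n ..< m n + n}) \<in> I"
    unfolding has_PLI_def by blast
  have down: "\<And>X Y. X \<in> I \<Longrightarrow> Y \<subseteq> X \<Longrightarrow> Y \<in> I"
    using assms unfolding is_ideal_def by blast
  show "\<forall>nn :: nat \<Rightarrow> nat.
       (\<forall>k\<ge>1. nn k \<ge> 1) \<and> strict_mono_on {1..} nn \<longrightarrow>
       (\<exists>mm :: nat \<Rightarrow> nat.
          (\<forall>k\<ge>1. mm k \<ge> 1) \<and> strict_mono_on {1..} mm \<and>
          (\<Union>k\<in>{1..}. {mm k ..< mm k + nn k}) \<in> I \<and>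
          (\<forall>k\<ge>1. mm k + nn k - 1 < mm (k + 1)))"
  proof (intro allI impI)
    fix nn :: "nat \<Rightarrow> nat"
    define mm where "mm = rec_nat 1 (\<lambda>k r. gpos m (r + nn k) (nn (Suc k)))"
    have S: "mm (Suc k) = gpos m (mm k + nn k) (nn (Suc k))" for k
      unfolding mm_def by simp
    have gt: "mm k + nn k < mm (Suc k)" for k
      using S gpos_gt by metis
    have pos: "mm k \<ge> 1" for k
    proof (cases k)
      case 0 then show ?thesis by (simp add: mm_def)
    next
      case (Suc j) then show ?thesis using gt[of j] by simp
    qed
    have sm: "strict_mono mm"
      unfolding strict_mono_Suc_iff using gt by (metis add_lessD1)
    have sub: "(\<Union>k\<in>{1..}. {mm k ..< mm k + nn k}) \<subseteq> (\<Union>n\<in>{1..}. {m n ..< m n + n})"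
    proof
      fix x assume "x \<in> (\<Union>k\<in>{1..}. {mm k ..< mm k + nn k})"
      then obtain k where k: "k \<ge> 1" "x \<in> {mm k ..< mm k + nn k}" by blast
      then obtain j where j: "k = Suc j" by (cases k) auto
      let ?n = "mm j + nn j + nn (Suc j) + 1"
      have "x \<in> {m ?n ..< m ?n + ?n}"
        using gpos_sub[of m "mm j + nn j" "nn (Suc j)"] k(2) S[of j] j by auto
      then show "x \<in> (\<Union>n\<in>{1..}. {m n ..< m n + n})" by auto
    qed
    show "\<exists>mm :: nat \<Rightarrow> nat.
          (\<forall>k\<ge>1. mm k \<ge> 1) \<and> strict_mono_on {1..} mm \<and>
          (\<Union>k\<in>{1..}. {mm k ..< mm k + nn k}) \<in> I \<and>
          (\<forall>k\<ge>1. mm k + nn k - 1 < mm (k + 1))"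
      apply (rule exI[of _ mm])
    proof (intro conjI allI impI)
      show "strict_mono_on {1..} mm" using sm by (simp add: strict_mono_on_def strict_mono_def)
      show "(\<Union>k\<in>{1..}. {mm k ..< mm k + nn k}) \<in> I" using down[OF A sub] .
      fix k :: nat
      show "1 \<le> mm k" by (rule pos)
      show "mm k + nn k - 1 < mm (k + 1)" using gt[of k] by simp
    qed
  qed
next
  assume H: "\<forall>nn :: nat \<Rightarrow> nat.
       (\<forall>k\<ge>1. nn k \<ge> 1) \<and> strict_mono_on {1..} nn \<longrightarrow>
       (\<exists>mm :: nat \<Rightarrow> nat.
          (\<forall>k\<ge>1. mm k \<ge> 1) \<and> strict_mono_on {1..} mm \<and>
          (\<Union>k\<in>{1..}. {mm k ..< mm k + nn k}) \<in> I \<and>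
          (\<forall>k\<ge>1. mm k + nn k - 1 < mm (k + 1)))"
  have "strict_mono_on {1..} (\<lambda>k::nat. k)" by (simp add: strict_mono_on_def)
  then obtain mm where "(\<forall>k\<ge>1. mm k \<ge> 1)" "(\<Union>k\<in>{1..}. {mm k ..< mm k + k}) \<in> I"
    using H[rule_format, of "\<lambda>k. k"] by auto
  then show "has_PLI I" unfolding has_PLI_def by blast
qed

end
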